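(* Let $w:\mathbb N\to\mathbb R_{>0}$ be one of the weight functions $w(n)=n+1$, $w(n)=1$, or $w(n)=\frac1{n+1}$, and let $d_w(x,y)=\sum_{j\ge0}w(j)|x_j-y_j|$ on $\mathbb Z^\infty$. For $j\in\mathbb N$ let $X_j=\mathbb Z_{\ge0}^j\times\mathbb Z_{\le0}\times\mathbb Z^\infty=\{x\in\mathbb Z^\infty: x_0,\dots,x_{j-1}\ge0,\ x_j\le0\}$. Then $\{X_j\}_{j\in\mathbb N}$ is a coarsely excisive cover of $(\mathbb Z^\infty,d_w)$: for every nonempty finite $J\subseteq\mathbb N$ and $R>0$ there is $S>0$ with $\bigcap_{j\in J}N_w(X_j,R)\subseteq N_w(\bigcap_{j\in J}X_j,S)$.
   Context: $\mathbb Z^\infty=\bigoplus_{\mathbb N}\mathbb Z$ is the set of integer sequences with finitely many nonzero entries. $N_w(Y,R)=\{x\in\mathbb Z^\infty:\inf_{y\in Y}d_w(x,y)\le R\}$. A cover by closed subsets is coarsely excisive if the stated neighborhood condition holds for all nonempty finite subcollections and all $R>0$. *)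

theory Defs
  imports "HOL-Analysis.Analysis"
begin

definition Zinf :: "(nat \<Rightarrow> int) set" where
  "Zinf = {x. finite {j. x j \<noteq> 0}}"

text \<open>Weighted l1 distance d_w(x,y) = sum_j w(j) |x_j - y_j|; for x,y in Zinf
  only finitely many terms are nonzero, so the series is this finite sum.\<close>
definition dw :: "(nat \<Rightarrow> real) \<Rightarrow> (nat \<Rightarrow> int) \<Rightarrow> (nat \<Rightarrow> int) \<Rightarrow> real" where
  "dw w x y = (\<Sum>j\<in>{j. x j \<noteq> y j}. w j * real_of_int \<bar>x j - y j\<bar>)"

definition Nw :: "(nat \<Rightarrow> real) \<Rightarrow> (nat \<Rightarrow> int) set \<Rightarrow> real \<Rightarrow> (nat \<Rightarrow> int) set" where
  "Nw w Y R = {x \<in> Zinf. Inf ((\<lambda>y. dw w x y) ` Y) \<le> R}"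

definition Xset :: "nat \<Rightarrow> (nat \<Rightarrow> int) set" where
  "Xset j = {x \<in> Zinf. (\<forall>i<j. x i \<ge> 0) \<and> x j \<le> 0}"

text \<open>A family of subsets of Zinf (indexed by nat) is a coarsely excisive cover
  of (Zinf, d_w): it covers Zinf, and for every nonempty finite J and R > 0
  there is S > 0 with the neighbourhood condition.  (All subsets are closed,
  since distinct points of Zinf have distance >= min weight on a finite support > 0.)\<close>
definition coarsely_excisive_cover ::
  "(nat \<Rightarrow> real) \<Rightarrow> (nat \<Rightarrow> (nat \<Rightarrow> int) set) \<Rightarrow> bool" where
  "coarsely_excisive_cover w X \<longleftrightarrow>
     (\<forall>j. X j \<subseteq> Zinf) \<and> (\<Union>j. X j) = Zinf \<and>
     (\<forall>J R. finite J \<and> J \<noteq> {} \<and> R > 0 \<longrightarrow>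
        (\<exists>S>0. (\<Inter>j\<in>J. Nw w (X j) R) \<subseteq> Nw w (\<Inter>j\<in>J. X j) S))"

end

theory Submission
  imports Defs
begin

lemma dw_eq_sum:
  assumes "{i. x i \<noteq> y i} \<subseteq> A" "finite A"
  shows "dw w x y = (\<Sum>i\<in>A. w i * real_of_int \<bar>x i - y i\<bar>)"
  unfolding dw_def
  by (rule sum.mono_neutral_left) (use assms in auto)

lemma Zinf_diff_finite:
  assumes "x \<in> Zinf" "z \<in> Zinf"
  shows "finite {i. x i \<noteq> z i}"
proof -
  have "{i. x i \<noteq> z i} \<subseteq> {j. x j \<noteq> 0} \<union> {j. z j \<noteq> 0}" by auto
  thus ?thesis using assms unfolding Zinf_def by (auto intro: finite_subset)
qed

lemma dw_nonneg:
  assumes "\<And>n. w n > 0"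
  shows "dw w x z \<ge> 0"
  unfolding dw_def using assms by (intro sum_nonneg) (simp add: less_imp_le)

lemma dw_ge_sum:
  assumes "\<And>n. w n > 0" "x \<in> Zinf" "z \<in> Zinf" "finite A"
  shows "(\<Sum>i\<in>A. w i * real_of_int \<bar>x i - z i\<bar>) \<le> dw w x z"
proof -
  let ?D = "{i. x i \<noteq> z i}"
  have fD: "finite ?D" using Zinf_diff_finite assms by blast
  have "(\<Sum>i\<in>A. w i * real_of_int \<bar>x i - z i\<bar>) = (\<Sum>i\<in>A \<inter> ?D. w i * real_of_int \<bar>x i - z i\<bar>)"
    by (rule sum.mono_neutral_right) (use assms in auto)
  also have "\<dots> \<le> (\<Sum>i\<in>?D. w i * real_of_int \<bar>x i - z i\<bar>)"
    by (rule sum_mono2) (use fD assms in \<open>auto simp: less_imp_le\<close>)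
  finally show ?thesis unfolding dw_def .
qed

definition L :: "(nat \<Rightarrow> real) \<Rightarrow> (nat \<Rightarrow> int) \<Rightarrow> nat \<Rightarrow> real" where
  "L w x j = (\<Sum>i<j. w i * real_of_int (max (- x i) 0)) + w j * real_of_int (max (x j) 0)"

lemma zero_Zinf: "(\<lambda>_. 0) \<in> Zinf" unfolding Zinf_def by simp
lemma zero_X: "(\<lambda>_. 0) \<in> Xset j" unfolding Xset_def using zero_Zinf by simp

lemma L_le_dw:
  assumes "\<And>n. w n > 0" "x \<in> Zinf" "z \<in> Xset j"
  shows "L w x j \<le> dw w x z"
proof -
  have zZ: "z \<in> Zinf" and zi: "\<And>i. i < j \<Longrightarrow> z i \<ge> 0" and zj: "z j \<le> 0"
    using assms(3) unfolding Xset_def by auto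
  have "L w x j \<le> (\<Sum>i\<in>{..<j}. w i * real_of_int \<bar>x i - z i\<bar>) + w j * real_of_int \<bar>x j - z j\<bar>"
    unfolding L_def
  proof (rule add_mono)
    show "(\<Sum>i<j. w i * real_of_int (max (- x i) 0)) \<le> (\<Sum>i\<in>{..<j}. w i * real_of_int \<bar>x i - z i\<bar>)"
    proof (rule sum_mono)
      fix i assume "i \<in> {..<j}"
      hence "i < j" by simp
      hence "max (- x i) 0 \<le> \<bar>x i - z i\<bar>" using zi[of i] by auto
      hence "real_of_int (max (- x i) 0) \<le> real_of_int \<bar>x i - z i\<bar>" by linarith
      thus "w i * real_of_int (max (- x i) 0) \<le> w i * real_of_int \<bar>x i - z i\<bar>"
        using assms(1)[of i] by (simp add: mult_left_mono)
    qed
    have "max (x j) 0 \<le> \<bar>x j - z j\<bar>" using zj by auto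
    hence "real_of_int (max (x j) 0) \<le> real_of_int \<bar>x j - z j\<bar>" by linarith
    thus "w j * real_of_int (max (x j) 0) \<le> w j * real_of_int \<bar>x j - z j\<bar>"
      using assms(1)[of j] by (simp add: mult_left_mono)
  qed
  also have "\<dots> = (\<Sum>i\<in>{..j}. w i * real_of_int \<bar>x i - z i\<bar>)"
    by (simp add: lessThan_Suc_atMost[symmetric])
  also have "\<dots> \<le> dw w x z" by (rule dw_ge_sum) (use assms zZ in auto)
  finally show ?thesis .
qed

lemma L_le_R:
  assumes "\<And>n. w n > 0" "x \<in> Nw w (Xset j) R"
  shows "L w x j \<le> R"
proof -
  have xZ: "x \<in> Zinf" and I: "Inf ((\<lambda>y. dw w x y) ` Xset j) \<le> R"
    using assms(2) unfolding Nw_def by auto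
  have "L w x j \<le> Inf ((\<lambda>y. dw w x y) ` Xset j)"
  proof (rule cInf_greatest)
    show "(\<lambda>y. dw w x y) ` Xset j \<noteq> {}" using zero_X[of j] by blast
  qed (use L_le_dw assms(1) xZ in auto)
  thus ?thesis using I by linarith
qed

lemma main:
  assumes wpos: "\<And>n. w n > 0" and J: "finite J" "J \<noteq> {}" and R: "R > 0"
  shows "(\<Inter>j\<in>J. Nw w (Xset j) R) \<subseteq> Nw w (\<Inter>j\<in>J. Xset j) ((real (Max J) + 1) * R)"
proof
  fix x assume x: "x \<in> (\<Inter>j\<in>J. Nw w (Xset j) R)"
  define m where "m = Max J"
  have mJ: "m \<in> J" and jm: "\<And>j. j \<in> J \<Longrightarrow> j \<le> m" using J unfolding m_def by auto
  have xZ: "x \<in> Zinf" using x J unfolding Nw_def by auto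
  have LR: "\<And>j. j \<in> J \<Longrightarrow> L w x j \<le> R" using x L_le_R wpos by blast
  define y where "y i = (if i < m then (if i \<in> J then 0 else max (x i) 0)
                         else if i = m then min (x m) 0 else x i)" for i
  have yx: "{i. y i \<noteq> 0} \<subseteq> {i. x i \<noteq> 0}" unfolding y_def by auto
  have yZ: "y \<in> Zinf" using xZ yx unfolding Zinf_def by (auto intro: finite_subset)
  have yX: "y \<in> (\<Inter>j\<in>J. Xset j)"
  proof
    fix j assume jJ: "j \<in> J"
    have "j \<le> m" using jm jJ by auto
    thus "y \<in> Xset j" using yZ jJ unfolding Xset_def y_def by auto
  qed
  have diff: "{i. x i \<noteq> y i} \<subseteq> {..m}" unfolding y_def by auto
  have dxy: "dw w x y = (\<Sum>i\<in>{..m}. w i * real_of_int \<bar>x i - y i\<bar>)"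
    by (rule dw_eq_sum[OF diff]) simp
  define P where "P i = (if i \<in> J then w i * real_of_int (max (x i) 0) else 0)" for i
  have tm: "w i * real_of_int \<bar>x i - y i\<bar> \<le> w i * real_of_int (max (- x i) 0) + P i" if "i < m" for i
  proof (cases "i \<in> J")
    case True
    have "real_of_int \<bar>x i - y i\<bar> = real_of_int (max (- x i) 0) + real_of_int (max (x i) 0)"
      using that True unfolding y_def by auto
    thus ?thesis using True unfolding P_def by (simp add: distrib_left)
  next
    case False
    have "real_of_int \<bar>x i - y i\<bar> = real_of_int (max (- x i) 0)"
      using that False unfolding y_def by auto
    thus ?thesis using False unfolding P_def by simp
  qed
  have PR: "P i \<le> R" for i
  proof (cases "i \<in> J")
    case True
    have "0 \<le> (\<Sum>i<i. w i * real_of_int (max (- x i) 0))"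
      using wpos by (intro sum_nonneg) (simp add: less_imp_le)
    thus ?thesis using LR[OF True] True unfolding P_def L_def by simp
  qed (use R in \<open>simp add: P_def\<close>)
  have "dw w x y = (\<Sum>i<m. w i * real_of_int \<bar>x i - y i\<bar>) + w m * real_of_int \<bar>x m - y m\<bar>"
    by (simp add: dxy lessThan_Suc_atMost[symmetric])
  also have "\<dots> \<le> ((\<Sum>i<m. w i * real_of_int (max (- x i) 0)) + (\<Sum>i<m. P i)) + w m * real_of_int (max (x m) 0)"
  proof (rule add_mono)
    show "(\<Sum>i<m. w i * real_of_int \<bar>x i - y i\<bar>) \<le> (\<Sum>i<m. w i * real_of_int (max (- x i) 0)) + (\<Sum>i<m. P i)"
      unfolding sum.distrib[symmetric] by (rule sum_mono) (use tm in auto)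
    have "\<bar>x m - y m\<bar> = max (x m) 0" unfolding y_def by auto
    thus "w m * real_of_int \<bar>x m - y m\<bar> \<le> w m * real_of_int (max (x m) 0)" by simp
  qed
  also have "\<dots> = L w x m + (\<Sum>i<m. P i)" unfolding L_def by simp
  also have "\<dots> \<le> R + (\<Sum>i<m. R)"
  proof (rule add_mono)
    show "L w x m \<le> R" using LR mJ by blast
    show "(\<Sum>i<m. P i) \<le> (\<Sum>i<m. R)" by (rule sum_mono) (rule PR)
  qed
  also have "\<dots> = (real m + 1) * R" by (simp add: algebra_simps)
  finally have dle: "dw w x y \<le> (real m + 1) * R" .
  have "Inf ((\<lambda>z. dw w x z) ` (\<Inter>j\<in>J. Xset j)) \<le> dw w x y"
  proof (rule cInf_lower)
    show "bdd_below ((\<lambda>z. dw w x z) ` (\<Inter>j\<in>J. Xset j))"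
      by (rule bdd_belowI2[where m=0]) (rule dw_nonneg[OF wpos])
  qed (use yX in auto)
  thus "x \<in> Nw w (\<Inter>j\<in>J. Xset j) ((real (Max J) + 1) * R)"
    using dle xZ unfolding Nw_def m_def by auto
qed

lemma general:
  assumes wpos: "\<And>n. w n > 0"
  shows "coarsely_excisive_cover w Xset"
  unfolding coarsely_excisive_cover_def
proof (intro conjI allI impI)
  show "Xset j \<subseteq> Zinf" for j unfolding Xset_def by auto
  show "(\<Union>j. Xset j) = Zinf"
  proof
    show "(\<Union>j. Xset j) \<subseteq> Zinf" unfolding Xset_def by auto
    show "Zinf \<subseteq> (\<Union>j. Xset j)"
    proof
      fix x assume xZ: "x \<in> Zinf"
      have "\<exists>j. x j \<le> 0"
      proof (rule ccontr)
        assume "\<not> ?thesis"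
        hence "\<forall>j. x j \<noteq> 0" by (metis order_refl)
        hence "{j. x j \<noteq> 0} = UNIV" by auto
        thus False using xZ unfolding Zinf_def by simp
      qed
      define j where "j = (LEAST j. x j \<le> 0)"
      have "x j \<le> 0" unfolding j_def using \<open>\<exists>j. x j \<le> 0\<close> by (metis LeastI_ex)
      moreover have "\<forall>i<j. x i \<ge> 0" unfolding j_def using not_less_Least by fastforce
      ultimately show "x \<in> (\<Union>j. Xset j)" using xZ unfolding Xset_def by blast
    qed
  qed
  fix J :: "nat set" and R :: real
  assume H: "finite J \<and> J \<noteq> {} \<and> 0 < R"
  show "\<exists>S>0. (\<Inter>j\<in>J. Nw w (Xset j) R) \<subseteq> Nw w (\<Inter>j\<in>J. Xset j) S"
    using main[OF wpos, of J R] H by (intro exI[of _ "(real (Max J) + 1) * R"]) auto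
qed

theorem lemma7p3p7:
  fixes w :: "nat \<Rightarrow> real"
  assumes "w = (\<lambda>n. real n + 1) \<or> w = (\<lambda>n. 1) \<or> w = (\<lambda>n. 1 / (real n + 1))"
  shows "coarsely_excisive_cover w Xset"
proof (rule general)
  fix n show "w n > 0" using assms by (auto simp: add_pos_pos)
qed

end
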